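(* Let $\mathcal{H}$ be a complex Hilbert space of $\mathbb{C}^n$-valued functions, with scalar product $\langle\cdot,\cdot\rangle$. Let $D$ be a selfadjoint operator on $\mathcal{H}$ with domain $\mathcal{D}_0$. Let $W_L,W_R$ be bounded selfadjoint operators on $\mathcal{H}$ such that: - $W_LW_R=W_RW_L$; - $W_L^{-1}$ and $W_R^{-1}$ exist and are bounded; - $W_RW_L^{-1}$ is selfadjoint; - $W_RW_L^{-1}\ge c\,\mathrm{id}$ for some $c>0$. Define $M=W_L\,D\,W_R$ with domain $\mathcal{D}_R:=W_R^{-1}\mathcal{D}_0$. Assume that complex conjugation $(C\Psi)(x)=\overline{\Psi(x)}$ satisfies $C\mathcal{D}_R=\mathcal{D}_R$ and $CMC=-M$. Let $\mathcal{H}_W$ denote $\mathcal{H}$ equipped with the scalar product $\langle\Phi,\Psi\rangle_W:=\langle\Phi,W\Psi\rangle$, where $W:=W_L^{-1}W_R$. Then $M$ is selfadjoint on $\mathcal{H}_W$ with dense domain $\mathcal{D}_R$.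
   Context: An operator $M=W_LDW_R$ satisfying these hypotheses is called a generalized Maxwell-type operator. *)

theory Defs
  imports "HOL-Analysis.Analysis" "HOL-Library.Function_Algebras"
begin

text \<open>Elements of the Hilbert space are functions 'x => complex^'n (C^n-valued functions).
  An inner product is a map ip; the convention is linear in the second argument.\<close>

type_synonym ('x, 'n) cfun = "'x \<Rightarrow> complex ^ 'n"

definition smul :: "complex \<Rightarrow> ('x, 'n::finite) cfun \<Rightarrow> ('x, 'n) cfun" where
  "smul a \<Psi> = (\<lambda>x. a *s \<Psi> x)"

definition cconj :: "('x, 'n::finite) cfun \<Rightarrow> ('x, 'n) cfun" where
  "cconj \<Psi> = (\<lambda>x. \<chi> i. cnj (\<Psi> x $ i))"

definition hnorm :: "(('x, 'n::finite) cfun \<Rightarrow> ('x, 'n) cfun \<Rightarrow> complex) \<Rightarrow> ('x, 'n) cfun \<Rightarrow> real" where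
  "hnorm ip \<Psi> = sqrt (Re (ip \<Psi> \<Psi>))"

definition csubspace_in :: "('x, 'n::finite) cfun set \<Rightarrow> bool" where
  "csubspace_in S \<longleftrightarrow> 0 \<in> S \<and> (\<forall>\<Phi>\<in>S. \<forall>\<Psi>\<in>S. \<Phi> + \<Psi> \<in> S) \<and> (\<forall>a. \<forall>\<Psi>\<in>S. smul a \<Psi> \<in> S)"

definition complex_hilbert :: "('x, 'n::finite) cfun set \<Rightarrow> (('x, 'n) cfun \<Rightarrow> ('x, 'n) cfun \<Rightarrow> complex) \<Rightarrow> bool" where
  "complex_hilbert H ip \<longleftrightarrow>
     csubspace_in H \<and>
     (\<forall>\<Phi>\<in>H. \<forall>\<Psi>\<in>H. \<forall>\<Xi>\<in>H. ip \<Phi> (\<Psi> + \<Xi>) = ip \<Phi> \<Psi> + ip \<Phi> \<Xi>) \<and>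
     (\<forall>a. \<forall>\<Phi>\<in>H. \<forall>\<Psi>\<in>H. ip \<Phi> (smul a \<Psi>) = a * ip \<Phi> \<Psi>) \<and>
     (\<forall>\<Phi>\<in>H. \<forall>\<Psi>\<in>H. ip \<Phi> \<Psi> = cnj (ip \<Psi> \<Phi>)) \<and>
     (\<forall>\<Psi>\<in>H. Im (ip \<Psi> \<Psi>) = 0 \<and> Re (ip \<Psi> \<Psi>) \<ge> 0) \<and>
     (\<forall>\<Psi>\<in>H. ip \<Psi> \<Psi> = 0 \<longrightarrow> \<Psi> = 0) \<and>
     (\<forall>X. (\<forall>k. X k \<in> H) \<and> (\<forall>e>0. \<exists>N. \<forall>m\<ge>N. \<forall>k\<ge>N. hnorm ip (X m - X k) < e)
          \<longrightarrow> (\<exists>L\<in>H. (\<lambda>k. hnorm ip (X k - L)) \<longlonglongrightarrow> 0))"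

definition lin_on :: "('x, 'n::finite) cfun set \<Rightarrow> (('x, 'n) cfun \<Rightarrow> ('x, 'n) cfun) \<Rightarrow> bool" where
  "lin_on S A \<longleftrightarrow> (\<forall>\<Phi>\<in>S. \<forall>\<Psi>\<in>S. A (\<Phi> + \<Psi>) = A \<Phi> + A \<Psi>) \<and> (\<forall>a. \<forall>\<Psi>\<in>S. A (smul a \<Psi>) = smul a (A \<Psi>))"

definition bounded_op :: "('x, 'n::finite) cfun set \<Rightarrow> (('x, 'n) cfun \<Rightarrow> ('x, 'n) cfun \<Rightarrow> complex) \<Rightarrow> (('x, 'n) cfun \<Rightarrow> ('x, 'n) cfun) \<Rightarrow> bool" where
  "bounded_op H ip A \<longleftrightarrow> (\<forall>\<Psi>\<in>H. A \<Psi> \<in> H) \<and> lin_on H A \<and> (\<exists>K. \<forall>\<Psi>\<in>H. hnorm ip (A \<Psi>) \<le> K * hnorm ip \<Psi>)"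

definition bounded_selfadjoint :: "('x, 'n::finite) cfun set \<Rightarrow> (('x, 'n) cfun \<Rightarrow> ('x, 'n) cfun \<Rightarrow> complex) \<Rightarrow> (('x, 'n) cfun \<Rightarrow> ('x, 'n) cfun) \<Rightarrow> bool" where
  "bounded_selfadjoint H ip A \<longleftrightarrow> bounded_op H ip A \<and> (\<forall>\<Phi>\<in>H. \<forall>\<Psi>\<in>H. ip (A \<Phi>) \<Psi> = ip \<Phi> (A \<Psi>))"

definition dense_in :: "('x, 'n::finite) cfun set \<Rightarrow> (('x, 'n) cfun \<Rightarrow> ('x, 'n) cfun \<Rightarrow> complex) \<Rightarrow> ('x, 'n) cfun set \<Rightarrow> bool" where
  "dense_in H ip S \<longleftrightarrow> S \<subseteq> H \<and> (\<forall>\<Psi>\<in>H. \<forall>e>0. \<exists>\<Phi>\<in>S. hnorm ip (\<Psi> - \<Phi>) < e)"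

definition adj_dom :: "('x, 'n::finite) cfun set \<Rightarrow> (('x, 'n) cfun \<Rightarrow> ('x, 'n) cfun \<Rightarrow> complex) \<Rightarrow> ('x, 'n) cfun set \<Rightarrow> (('x, 'n) cfun \<Rightarrow> ('x, 'n) cfun) \<Rightarrow> ('x, 'n) cfun set" where
  "adj_dom H ip Dom A = {\<Phi>\<in>H. \<exists>\<eta>\<in>H. \<forall>\<Psi>\<in>Dom. ip \<Phi> (A \<Psi>) = ip \<eta> \<Psi>}"

definition selfadjoint_op :: "('x, 'n::finite) cfun set \<Rightarrow> (('x, 'n) cfun \<Rightarrow> ('x, 'n) cfun \<Rightarrow> complex) \<Rightarrow> ('x, 'n) cfun set \<Rightarrow> (('x, 'n) cfun \<Rightarrow> ('x, 'n) cfun) \<Rightarrow> bool" where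
  "selfadjoint_op H ip Dom A \<longleftrightarrow>
     csubspace_in Dom \<and> dense_in H ip Dom \<and> (\<forall>\<Psi>\<in>Dom. A \<Psi> \<in> H) \<and> lin_on Dom A \<and>
     (\<forall>\<Phi>\<in>Dom. \<forall>\<Psi>\<in>Dom. ip (A \<Phi>) \<Psi> = ip \<Phi> (A \<Psi>)) \<and>
     adj_dom H ip Dom A = Dom"

end

theory Submission
  imports Defs
begin

lemma smul_m1: "smul (-1) (b::('x,'n::finite) cfun) = - b"
  by (auto simp: smul_def fun_eq_iff vec_eq_iff)

lemma hil_sub: "complex_hilbert H ip \<Longrightarrow> csubspace_in H"
  by (simp add: complex_hilbert_def)

lemma sub_zero: "csubspace_in S \<Longrightarrow> 0 \<in> S" by (simp add: csubspace_in_def)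
lemma sub_add: "csubspace_in S \<Longrightarrow> a \<in> S \<Longrightarrow> b \<in> S \<Longrightarrow> a + b \<in> S" by (simp add: csubspace_in_def)
lemma sub_smul: "csubspace_in S \<Longrightarrow> b \<in> S \<Longrightarrow> smul a b \<in> S" by (simp add: csubspace_in_def)
lemma sub_uminus: "csubspace_in S \<Longrightarrow> b \<in> S \<Longrightarrow> - b \<in> S"
  using sub_smul[of S b "-1"] smul_m1[of b] by simp
lemma sub_diff: "csubspace_in S \<Longrightarrow> a \<in> S \<Longrightarrow> b \<in> S \<Longrightarrow> a - b \<in> S"
  using sub_add[of S a "-b"] sub_uminus[of S b] by simp

lemma lin_zero: "lin_on S A \<Longrightarrow> csubspace_in S \<Longrightarrow> A 0 = 0"
proof -
  assume "lin_on S A" "csubspace_in S"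
  then have "A (0+0) = A 0 + A 0" using sub_zero unfolding lin_on_def by blast
  then show ?thesis by simp
qed
lemma lin_add: "lin_on S A \<Longrightarrow> a \<in> S \<Longrightarrow> b \<in> S \<Longrightarrow> A (a + b) = A a + A b"
  by (simp add: lin_on_def)
lemma lin_smul: "lin_on S A \<Longrightarrow> b \<in> S \<Longrightarrow> A (smul a b) = smul a (A b)"
  by (simp add: lin_on_def)
lemma lin_uminus: "lin_on S A \<Longrightarrow> b \<in> S \<Longrightarrow> A (- b) = - A b"
  using lin_smul[of S A b "-1"] by (simp add: smul_m1)
lemma lin_diff: "lin_on S A \<Longrightarrow> csubspace_in S \<Longrightarrow> a \<in> S \<Longrightarrow> b \<in> S \<Longrightarrow> A (a - b) = A a - A b"
proof -
  assume h: "lin_on S A" "csubspace_in S" "a \<in> S" "b \<in> S"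
  have "A (a + - b) = A a + A (- b)" using lin_add[OF h(1) h(3) sub_uminus[OF h(2) h(4)]] .
  also have "A (- b) = - A b" using lin_uminus[OF h(1) h(4)] .
  finally show ?thesis by (simp only: diff_conv_add_uminus)
qed

context
  fixes H :: "('x, 'n::finite) cfun set" and ip
  assumes hilb: "complex_hilbert H ip"
begin

lemma ip_add_r: "a \<in> H \<Longrightarrow> b \<in> H \<Longrightarrow> c \<in> H \<Longrightarrow> ip a (b + c) = ip a b + ip a c"
  using hilb[unfolded complex_hilbert_def, THEN conjunct2, THEN conjunct1] by blast
lemma ip_smul_r: "a \<in> H \<Longrightarrow> b \<in> H \<Longrightarrow> ip a (smul s b) = s * ip a b"
  using hilb[unfolded complex_hilbert_def, THEN conjunct2, THEN conjunct2, THEN conjunct1] by blast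
lemma ip_sym: "a \<in> H \<Longrightarrow> b \<in> H \<Longrightarrow> ip a b = cnj (ip b a)"
  using hilb[unfolded complex_hilbert_def, THEN conjunct2, THEN conjunct2, THEN conjunct2, THEN conjunct1] by blast
lemma ip_pos: "a \<in> H \<Longrightarrow> Re (ip a a) \<ge> 0"
  using hilb[unfolded complex_hilbert_def, THEN conjunct2, THEN conjunct2, THEN conjunct2, THEN conjunct2, THEN conjunct1] by blast
lemma ip_add_l: "a \<in> H \<Longrightarrow> b \<in> H \<Longrightarrow> c \<in> H \<Longrightarrow> ip (a + b) c = ip a c + ip b c"
proof -
  assume h: "a \<in> H" "b \<in> H" "c \<in> H"
  have ab: "a + b \<in> H" using h sub_add hil_sub[OF hilb] by blast
  have "ip (a + b) c = cnj (ip c (a + b))" using ip_sym[OF ab h(3)] .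
  also have "\<dots> = cnj (ip c a) + cnj (ip c b)" using ip_add_r h by simp
  also have "\<dots> = ip a c + ip b c" using ip_sym[OF h(1,3)] ip_sym[OF h(2,3)] by simp
  finally show ?thesis .
qed
lemma ip_uminus_r: "a \<in> H \<Longrightarrow> b \<in> H \<Longrightarrow> ip a (- b) = - ip a b"
  using ip_smul_r[of a b "-1"] by (simp add: smul_m1)
lemma ip_uminus_l: "a \<in> H \<Longrightarrow> b \<in> H \<Longrightarrow> ip (- a) b = - ip a b"
proof -
  assume h: "a \<in> H" "b \<in> H"
  have m: "- a \<in> H" using h sub_uminus hil_sub[OF hilb] by blast
  have "ip (- a) b = cnj (ip b (- a))" using ip_sym[OF m h(2)] .
  also have "\<dots> = - cnj (ip b a)" using ip_uminus_r h by simp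
  also have "\<dots> = - ip a b" using ip_sym[OF h(1,2)] by simp
  finally show ?thesis .
qed
lemma ip_diff_r: "a \<in> H \<Longrightarrow> b \<in> H \<Longrightarrow> c \<in> H \<Longrightarrow> ip a (b - c) = ip a b - ip a c"
proof -
  assume h: "a \<in> H" "b \<in> H" "c \<in> H"
  have "ip a (b + - c) = ip a b + ip a (- c)" using ip_add_r[OF h(1,2) sub_uminus[OF hil_sub[OF hilb] h(3)]] .
  also have "ip a (- c) = - ip a c" using ip_uminus_r[OF h(1,3)] .
  finally show ?thesis by (simp only: diff_conv_add_uminus)
qed
lemma ip_diff_l: "a \<in> H \<Longrightarrow> b \<in> H \<Longrightarrow> c \<in> H \<Longrightarrow> ip (a - b) c = ip a c - ip b c"
proof -
  assume h: "a \<in> H" "b \<in> H" "c \<in> H"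
  have "ip (a + - b) c = ip a c + ip (- b) c" using ip_add_l[OF h(1) sub_uminus[OF hil_sub[OF hilb] h(2)] h(3)] .
  also have "ip (- b) c = - ip b c" using ip_uminus_l[OF h(2,3)] .
  finally show ?thesis by (simp only: diff_conv_add_uminus)
qed

lemma hnorm_sq: "a \<in> H \<Longrightarrow> hnorm ip a ^ 2 = Re (ip a a)"
  using ip_pos by (simp add: hnorm_def)
lemma hnorm_nn: "a \<in> H \<Longrightarrow> hnorm ip a \<ge> 0"
  using ip_pos by (simp add: hnorm_def)

lemma two_re: "x \<in> H \<Longrightarrow> y \<in> H \<Longrightarrow> 2 * Re (ip x y) \<le> Re (ip x x) + Re (ip y y)"
proof -
  assume h: "x \<in> H" "y \<in> H"
  have d: "x - y \<in> H" using h sub_diff hil_sub[OF hilb] by blast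
  have "0 \<le> Re (ip (x - y) (x - y))" using ip_pos d by blast
  also have "ip (x - y) (x - y) = ip x x - ip x y - (ip y x - ip y y)"
    using ip_diff_l[OF h d] ip_diff_r h by simp
  also have "Re (ip y x) = Re (ip x y)" using ip_sym[OF h(2) h(1)] by simp
  ultimately show ?thesis by simp
qed

lemma bd_nn: "bounded_op H ip A \<Longrightarrow> \<exists>K\<ge>0. \<forall>\<Psi>\<in>H. hnorm ip (A \<Psi>) \<le> K * hnorm ip \<Psi>"
proof -
  assume "bounded_op H ip A"
  then obtain K where K: "\<forall>\<Psi>\<in>H. hnorm ip (A \<Psi>) \<le> K * hnorm ip \<Psi>" by (auto simp: bounded_op_def)
  have "\<forall>\<Psi>\<in>H. hnorm ip (A \<Psi>) \<le> max K 0 * hnorm ip \<Psi>"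
  proof
    fix \<Psi> assume p: "\<Psi> \<in> H"
    have "K * hnorm ip \<Psi> \<le> max K 0 * hnorm ip \<Psi>" using hnorm_nn[OF p] by (simp add: mult_right_mono)
    then show "hnorm ip (A \<Psi>) \<le> max K 0 * hnorm ip \<Psi>" using K p by force
  qed
  then show ?thesis by (intro exI[of _ "max K 0"]) simp
qed

end

theorem proposition6p2:
  fixes H :: "('x \<Rightarrow> complex ^ 'n::finite) set"
    and ip :: "('x \<Rightarrow> complex ^ 'n) \<Rightarrow> ('x \<Rightarrow> complex ^ 'n) \<Rightarrow> complex"
    and D WL WR WLi WRi :: "('x \<Rightarrow> complex ^ 'n) \<Rightarrow> ('x \<Rightarrow> complex ^ 'n)"
    and D0 :: "('x \<Rightarrow> complex ^ 'n) set"
    and c :: real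
  assumes hilb: "complex_hilbert H ip"
    and D_sa: "selfadjoint_op H ip D0 D"
    and WL_sa: "bounded_selfadjoint H ip WL"
    and WR_sa: "bounded_selfadjoint H ip WR"
    and comm: "\<forall>\<Psi>\<in>H. WL (WR \<Psi>) = WR (WL \<Psi>)"
    and WLi_bd: "bounded_op H ip WLi"
    and WLi_inv: "\<forall>\<Psi>\<in>H. WLi (WL \<Psi>) = \<Psi> \<and> WL (WLi \<Psi>) = \<Psi>"
    and WRi_bd: "bounded_op H ip WRi"
    and WRi_inv: "\<forall>\<Psi>\<in>H. WRi (WR \<Psi>) = \<Psi> \<and> WR (WRi \<Psi>) = \<Psi>"
    and WRWLi_sa: "bounded_selfadjoint H ip (\<lambda>\<Psi>. WR (WLi \<Psi>))"
    and c_pos: "c > 0"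
    and WRWLi_ge: "\<forall>\<Psi>\<in>H. c * Re (ip \<Psi> \<Psi>) \<le> Re (ip \<Psi> (WR (WLi \<Psi>)))"
    and C_dom: "cconj ` (WRi ` D0) = WRi ` D0"
    and C_anti: "\<forall>\<Psi>\<in>WRi ` D0. cconj (WL (D (WR (cconj \<Psi>)))) = - WL (D (WR \<Psi>))"
  shows "selfadjoint_op H (\<lambda>\<Phi> \<Psi>. ip \<Phi> (WLi (WR \<Psi>))) (WRi ` D0) (\<lambda>\<Psi>. WL (D (WR \<Psi>)))"
proof -
  have sH: "csubspace_in H" using hil_sub[OF hilb] .
  have sD0: "csubspace_in D0" and D0H: "D0 \<subseteq> H" and DH: "\<forall>a\<in>D0. D a \<in> H"
    and Dlin: "lin_on D0 D" and Dsym: "\<forall>a\<in>D0. \<forall>b\<in>D0. ip (D a) b = ip a (D b)"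
    and Dadj: "adj_dom H ip D0 D = D0"
    using D_sa by (auto simp: selfadjoint_op_def dense_in_def)
  have Ddense: "\<forall>\<Psi>\<in>H. \<forall>e>0. \<exists>\<Phi>\<in>D0. hnorm ip (\<Psi> - \<Phi>) < e"
    using D_sa by (auto simp: selfadjoint_op_def dense_in_def)
  have WLH: "\<And>x. x \<in> H \<Longrightarrow> WL x \<in> H" and WLlin: "lin_on H WL"
    and WLs: "\<And>x y. x \<in> H \<Longrightarrow> y \<in> H \<Longrightarrow> ip (WL x) y = ip x (WL y)"
    using WL_sa by (auto simp: bounded_selfadjoint_def bounded_op_def)
  have WRH: "\<And>x. x \<in> H \<Longrightarrow> WR x \<in> H" and WRlin: "lin_on H WR"
    and WRs: "\<And>x y. x \<in> H \<Longrightarrow> y \<in> H \<Longrightarrow> ip (WR x) y = ip x (WR y)"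
    using WR_sa by (auto simp: bounded_selfadjoint_def bounded_op_def)
  have WLiH: "\<And>x. x \<in> H \<Longrightarrow> WLi x \<in> H" using WLi_bd by (auto simp: bounded_op_def)
  have WRiH: "\<And>x. x \<in> H \<Longrightarrow> WRi x \<in> H" and WRilin: "lin_on H WRi"
    using WRi_bd by (auto simp: bounded_op_def)
  define DR where "DR = WRi ` D0"
  have DRH: "DR \<subseteq> H" using D0H WRiH by (auto simp: DR_def)
  have WLiWRWL: "\<And>y. y \<in> H \<Longrightarrow> WLi (WR (WL y)) = WR y"
    using comm WLi_inv WRH by metis
  have WLis: "\<And>x y. x \<in> H \<Longrightarrow> y \<in> H \<Longrightarrow> ip x (WLi y) = ip (WLi x) y"
  proof -
    fix x y assume h: "x \<in> H" "y \<in> H"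
    have "ip x (WLi y) = ip (WL (WLi x)) (WLi y)" using WLi_inv h by simp
    also have "\<dots> = ip (WLi x) (WL (WLi y))" using WLs WLiH h by blast
    also have "\<dots> = ip (WLi x) y" using WLi_inv h by simp
    finally show "ip x (WLi y) = ip (WLi x) y" .
  qed
  have sym: "\<And>a b. a \<in> D0 \<Longrightarrow> b \<in> D0 \<Longrightarrow>
      ip (WL (D (WR (WRi a)))) (WLi (WR (WRi b))) = ip (WRi a) (WLi (WR (WL (D (WR (WRi b))))))"
  proof -
    fix a b assume h: "a \<in> D0" "b \<in> D0"
    have aH: "a \<in> H" and bH: "b \<in> H" using h D0H by auto
    have e1: "WR (WRi a) = a" "WR (WRi b) = b" using WRi_inv aH bH by auto
    have "ip (WL (D a)) (WLi b) = ip (D a) (WL (WLi b))" using WLs DH h WLiH bH by blast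
    also have "\<dots> = ip (D a) b" using WLi_inv bH by simp
    also have "\<dots> = ip a (D b)" using Dsym h by blast
    also have "\<dots> = ip (WR (WRi a)) (D b)" using e1 by simp
    also have "\<dots> = ip (WRi a) (WR (D b))" using WRs WRiH aH DH h by blast
    also have "\<dots> = ip (WRi a) (WLi (WR (WL (D b))))" using WLiWRWL DH h by simp
    finally show "?thesis a b" using e1 by simp
  qed
  have c1: "csubspace_in DR"
  proof -
    have "0 \<in> DR" using lin_zero[OF WRilin sH] sub_zero[OF sD0] unfolding DR_def by force
    moreover have "\<forall>x\<in>DR. \<forall>y\<in>DR. x + y \<in> DR"
      using lin_add[OF WRilin] sub_add[OF sD0] D0H unfolding DR_def
      by (smt (verit, best) image_iff subset_iff)
    moreover have "\<forall>s. \<forall>y\<in>DR. smul s y \<in> DR"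
      using lin_smul[OF WRilin] sub_smul[OF sD0] D0H unfolding DR_def
      by (smt (verit, best) image_iff subset_iff)
    ultimately show ?thesis by (simp add: csubspace_in_def)
  qed
  have c3: "\<forall>\<Psi>\<in>DR. WL (D (WR \<Psi>)) \<in> H"
    using WRi_inv D0H DH WLH unfolding DR_def by auto
  have c4: "lin_on DR (\<lambda>\<Psi>. WL (D (WR \<Psi>)))"
    unfolding lin_on_def
  proof (intro conjI ballI allI)
    fix x y assume "x \<in> DR" "y \<in> DR"
    then obtain a b where ab: "a \<in> D0" "b \<in> D0" "x = WRi a" "y = WRi b" unfolding DR_def by auto
    have e: "WR x = a" "WR y = b" using ab WRi_inv D0H by auto
    have xy: "x \<in> H" "y \<in> H" using ab WRiH D0H by auto
    have "WR (x + y) = a + b" using lin_add[OF WRlin xy] e by simp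
    then show "WL (D (WR (x + y))) = WL (D (WR x)) + WL (D (WR y))"
      using lin_add[OF Dlin ab(1,2)] lin_add[OF WLlin] DH ab e by simp
  next
    fix s x assume "x \<in> DR"
    then obtain a where ab: "a \<in> D0" "x = WRi a" unfolding DR_def by auto
    have e: "WR x = a" using ab WRi_inv D0H by auto
    have xy: "x \<in> H" using ab WRiH D0H by auto
    have "WR (smul s x) = smul s a" using lin_smul[OF WRlin xy] e by simp
    then show "WL (D (WR (smul s x))) = smul s (WL (D (WR x)))"
      using lin_smul[OF Dlin ab(1)] lin_smul[OF WLlin] DH ab e by simp
  qed
  have c5: "\<forall>\<Phi>\<in>DR. \<forall>\<Psi>\<in>DR. ip (WL (D (WR \<Phi>))) (WLi (WR \<Psi>)) = ip \<Phi> (WLi (WR (WL (D (WR \<Psi>)))))"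
    using sym unfolding DR_def by blast
  have c6: "adj_dom H (\<lambda>\<Phi> \<Psi>. ip \<Phi> (WLi (WR \<Psi>))) DR (\<lambda>\<Psi>. WL (D (WR \<Psi>))) = DR"
  proof
    show "DR \<subseteq> adj_dom H (\<lambda>\<Phi> \<Psi>. ip \<Phi> (WLi (WR \<Psi>))) DR (\<lambda>\<Psi>. WL (D (WR \<Psi>)))"
    proof
      fix x assume x: "x \<in> DR"
      have "\<forall>\<Psi>\<in>DR. ip x (WLi (WR (WL (D (WR \<Psi>))))) = ip (WL (D (WR x))) (WLi (WR \<Psi>))"
        using c5 x by simp
      then show "x \<in> adj_dom H (\<lambda>\<Phi> \<Psi>. ip \<Phi> (WLi (WR \<Psi>))) DR (\<lambda>\<Psi>. WL (D (WR \<Psi>)))"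
        unfolding adj_dom_def using DRH c3 x by blast
    qed
  next
    show "adj_dom H (\<lambda>\<Phi> \<Psi>. ip \<Phi> (WLi (WR \<Psi>))) DR (\<lambda>\<Psi>. WL (D (WR \<Psi>))) \<subseteq> DR"
    proof
      fix \<Phi> assume "\<Phi> \<in> adj_dom H (\<lambda>\<Phi> \<Psi>. ip \<Phi> (WLi (WR \<Psi>))) DR (\<lambda>\<Psi>. WL (D (WR \<Psi>)))"
      then obtain \<eta> where ph: "\<Phi> \<in> H" "\<eta> \<in> H"
        and eq: "\<forall>\<Psi>\<in>DR. ip \<Phi> (WLi (WR (WL (D (WR \<Psi>))))) = ip \<eta> (WLi (WR \<Psi>))"
        unfolding adj_dom_def by auto
      have "\<forall>b\<in>D0. ip (WR \<Phi>) (D b) = ip (WLi \<eta>) b"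
      proof
        fix b assume b: "b \<in> D0"
        have bH: "b \<in> H" using b D0H by auto
        have e: "WR (WRi b) = b" using WRi_inv bH by auto
        have "WRi b \<in> DR" using b by (simp add: DR_def)
        then have "ip \<Phi> (WLi (WR (WL (D b)))) = ip \<eta> (WLi b)" using eq e by force
        then have "ip \<Phi> (WR (D b)) = ip (WLi \<eta>) b" using WLiWRWL DH b WLis ph bH by simp
        then show "ip (WR \<Phi>) (D b) = ip (WLi \<eta>) b" using WRs ph DH b by simp
      qed
      then have "WR \<Phi> \<in> adj_dom H ip D0 D" unfolding adj_dom_def using WRH WLiH ph by blast
      then have "WR \<Phi> \<in> D0" using Dadj by simp
      then show "\<Phi> \<in> DR" using WRi_inv ph unfolding DR_def by force
    qed
  qed
  have c2: "dense_in H (\<lambda>\<Phi> \<Psi>. ip \<Phi> (WLi (WR \<Psi>))) DR"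
    unfolding dense_in_def
  proof (intro conjI DRH ballI allI impI)
    fix \<Psi> e assume psi: "\<Psi> \<in> H" and e: "(e::real) > 0"
    obtain Kr where Kr: "Kr \<ge> 0" "\<forall>\<Psi>\<in>H. hnorm ip (WRi \<Psi>) \<le> Kr * hnorm ip \<Psi>"
      using bd_nn[OF hilb WRi_bd] by blast
    obtain Kl where Kl: "Kl \<ge> 0" "\<forall>\<Psi>\<in>H. hnorm ip (WLi \<Psi>) \<le> Kl * hnorm ip \<Psi>"
      using bd_nn[OF hilb WLi_bd] by blast
    obtain Kw where Kw: "Kw \<ge> 0" "\<forall>\<Psi>\<in>H. hnorm ip (WR \<Psi>) \<le> Kw * hnorm ip \<Psi>"
      using bd_nn[OF hilb] WR_sa unfolding bounded_selfadjoint_def by blast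
    define T where "T = 1 + Kl * Kw"
    have T1: "T \<ge> 1" using Kl Kw by (simp add: T_def)
    define \<delta> where "\<delta> = e / (T * (1 + Kr))"
    have dpos: "\<delta> > 0" using e T1 Kr by (simp add: \<delta>_def)
    have chi: "WR \<Psi> \<in> H" using WRH psi .
    obtain \<phi> where phi: "\<phi> \<in> D0" "hnorm ip (WR \<Psi> - \<phi>) < \<delta>"
      using Ddense chi dpos by blast
    have phiH: "\<phi> \<in> H" using phi D0H by auto
    have dH: "WR \<Psi> - \<phi> \<in> H" using sub_diff[OF sH chi phiH] .
    define x where "x = \<Psi> - WRi \<phi>"
    have xeq: "x = WRi (WR \<Psi> - \<phi>)"
      using lin_diff[OF WRilin sH chi phiH] WRi_inv psi by (simp add: x_def)
    have xH: "x \<in> H" using xeq WRiH dH by simp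
    have hd0: "hnorm ip (WR \<Psi> - \<phi>) \<ge> 0" using hnorm_nn[OF hilb dH] .
    have "hnorm ip x \<le> Kr * hnorm ip (WR \<Psi> - \<phi>)" using Kr xeq dH by simp
    also have "\<dots> \<le> (1 + Kr) * hnorm ip (WR \<Psi> - \<phi>)" using hd0 by (simp add: mult_right_mono)
    also have "\<dots> < (1 + Kr) * \<delta>" using phi Kr by simp
    finally have hx: "hnorm ip x < (1 + Kr) * \<delta>" .
    have hx0: "hnorm ip x \<ge> 0" using hnorm_nn[OF hilb xH] .
    define y where "y = WLi (WR x)"
    have yH: "y \<in> H" using WLiH WRH xH by (simp add: y_def)
    have "hnorm ip y \<le> Kl * hnorm ip (WR x)" using Kl WRH xH by (simp add: y_def)
    also have "\<dots> \<le> Kl * (Kw * hnorm ip x)" using Kl Kw xH by (simp add: mult_left_mono)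
    also have "\<dots> \<le> T * hnorm ip x" using hx0 by (simp add: T_def algebra_simps)
    finally have hy: "hnorm ip y \<le> T * hnorm ip x" .
    have hy0: "hnorm ip y \<ge> 0" using hnorm_nn[OF hilb yH] .
    have sq1: "hnorm ip y ^ 2 \<le> (T * hnorm ip x) ^ 2" using hy hy0 by (simp add: power_mono)
    have "1 * hnorm ip x \<le> T * hnorm ip x" using mult_right_mono[OF T1 hx0] .
    then have sq2: "hnorm ip x ^ 2 \<le> (T * hnorm ip x) ^ 2" using hx0
      by (simp add: power_mono)
    have "2 * Re (ip x y) \<le> Re (ip x x) + Re (ip y y)" using two_re[OF hilb xH yH] .
    also have "\<dots> = hnorm ip x ^ 2 + hnorm ip y ^ 2" using hnorm_sq[OF hilb] xH yH by simp
    finally have re1: "Re (ip x y) \<le> (T * hnorm ip x) ^ 2" using sq1 sq2 by simp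
    have "T * hnorm ip x < T * ((1 + Kr) * \<delta>)" using hx T1 by simp
    moreover have "T * ((1 + Kr) * \<delta>) = e" using T1 Kr by (simp add: \<delta>_def)
    ultimately have "T * hnorm ip x < e" by simp
    then have "(T * hnorm ip x) ^ 2 < e ^ 2" using hx0 T1
      by (simp add: power_strict_mono)
    then have "Re (ip x y) < e ^ 2" using re1 by simp
    then have "sqrt (Re (ip x y)) < e" using e
      by (metis abs_of_pos real_sqrt_abs real_sqrt_less_mono)
    then have "hnorm (\<lambda>\<Phi> \<Psi>. ip \<Phi> (WLi (WR \<Psi>))) (\<Psi> - WRi \<phi>) < e"
      by (simp add: hnorm_def x_def y_def)
    moreover have "WRi \<phi> \<in> DR" using phi by (simp add: DR_def)
    ultimately show "\<exists>\<Phi>\<in>DR. hnorm (\<lambda>\<Phi> \<Psi>. ip \<Phi> (WLi (WR \<Psi>))) (\<Psi> - \<Phi>) < e" by blast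
  qed
  show ?thesis unfolding selfadjoint_op_def DR_def[symmetric]
    using c1 c2 c3 c4 c5 c6 by blast
qed

end
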